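(* In the setting described in the context: (1) If the model is DUR with constants $d,k$ and the parametrisation $(\tilde X,\Theta)$ is GTIP, then for all sufficiently small $\alpha>0$, $\mathbf E\{e^{\alpha X}\mid Y=y,\Theta=\theta\}\le e^{\alpha\theta}(1-\alpha d/2)$ for all $\theta>k$, and $\mathbf E\{e^{-\alpha X}\mid Y=y,\Theta=\theta\}\le e^{-\alpha\theta}(1-\alpha d/2)$ for all $\theta<-k$. (2) If the model is PUR with constants $d,k$ and the parametrisation $(X,\Theta)$ is GTIP, then for all sufficiently small $\alpha>0$, $\mathbf E\{e^{\alpha(y-\tilde X)}\mid Y=y,\Theta=\theta\}\le e^{\alpha\theta}(1-\alpha d/2)$ for all $\theta>k$, and $\mathbf E\{e^{-\alpha(y-\tilde X)}\mid Y=y,\Theta=\theta\}\le e^{-\alpha\theta}(1-\alpha d/2)$ for all $\theta<-k$.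
   Context: Fix an observed value $y\in\mathbb R$. Consider the model $Y=X+Z_1$, $X=\Theta+Z_2$, where $Z_1,Z_2$ are independent real random variables, independent of $\Theta$, whose distributions are symmetric about $0$ and have continuous, bounded, everywhere positive Lebesgue densities $f_1,f_2$; $\Theta$ is given the improper flat (Lebesgue) prior on $\mathbb R$, and the posterior $\mathcal L(X,\Theta\mid Y=y)$ is proper. Write $\tilde X=X-\Theta$. A parametrisation $(U,\Theta)$, $U\in\{X,\tilde X\}$, is GTIP (geometrically tight in parameter) if there are constants $a,b>0$ not depending on $\theta$ such that $\mathbf P(|U|>x\mid Y=y,\Theta=\theta)\le ae^{-bx}$ for all $\theta\in\mathbb R$ and $x\ge0$. The model is DUR (data uniformly relevant) with constants $d,k>0$ if $|\mathbf E\{X\mid Y=y,\Theta=\theta\}|\le|\theta|-d$ for all $|\theta|>k$; it is PUR (parameter uniformly relevant) with constants $d,k>0$ if $\operatorname{sgn}(\theta)\,\mathbf E\{X-y\mid Y=y,\Theta=\theta\}\ge d$ for all $|\theta|>k$. *)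

theory Defs
  imports "HOL-Analysis.Analysis"
begin

definition noise_density :: "(real \<Rightarrow> real) \<Rightarrow> bool" where
  "noise_density f \<longleftrightarrow>
     f \<in> borel_measurable lborel \<and> integrable lborel f \<and> integral\<^sup>L lborel f = 1 \<and>
     (\<forall>x. f (- x) = f x) \<and> continuous_on UNIV f \<and> bounded (range f) \<and> (\<forall>x. 0 < f x)"

text \<open>Unnormalised joint posterior density of (X, Theta) given Y = y under the flat prior:
  f2 (x - theta) * f1 (y - x).\<close>
definition post_dens :: "(real \<Rightarrow> real) \<Rightarrow> (real \<Rightarrow> real) \<Rightarrow> real \<Rightarrow> real \<Rightarrow> real \<Rightarrow> real" where
  "post_dens f1 f2 y \<theta> x = f2 (x - \<theta>) * f1 (y - x)"

definition posterior_proper :: "(real \<Rightarrow> real) \<Rightarrow> (real \<Rightarrow> real) \<Rightarrow> real \<Rightarrow> bool" where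
  "posterior_proper f1 f2 y \<longleftrightarrow>
     (\<integral>\<^sup>+ x. \<integral>\<^sup>+ \<theta>. ennreal (post_dens f1 f2 y \<theta> x) \<partial>lborel \<partial>lborel) < \<infinity>"

definition cond_law :: "(real \<Rightarrow> real) \<Rightarrow> (real \<Rightarrow> real) \<Rightarrow> real \<Rightarrow> real \<Rightarrow> real measure" where
  "cond_law f1 f2 y \<theta> = density lborel (\<lambda>x. ennreal (post_dens f1 f2 y \<theta> x /
       (LINT u|lborel. post_dens f1 f2 y \<theta> u)))"

text \<open>GTIP for the parametrisation (U, Theta), where U is given as a function
  U theta x of the parameter and of X (U = X: (\<lambda>\<theta> x. x); U = X - Theta: (\<lambda>\<theta> x. x - \<theta>)).\<close>
definition GTIP :: "(real \<Rightarrow> real) \<Rightarrow> (real \<Rightarrow> real) \<Rightarrow> real \<Rightarrow> (real \<Rightarrow> real \<Rightarrow> real) \<Rightarrow> bool" where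
  "GTIP f1 f2 y U \<longleftrightarrow> (\<exists>a b. a > 0 \<and> b > 0 \<and>
     (\<forall>\<theta> t. t \<ge> 0 \<longrightarrow>
        measure (cond_law f1 f2 y \<theta>) {x. \<bar>U \<theta> x\<bar> > t} \<le> a * exp (- b * t)))"

definition DUR :: "(real \<Rightarrow> real) \<Rightarrow> (real \<Rightarrow> real) \<Rightarrow> real \<Rightarrow> real \<Rightarrow> real \<Rightarrow> bool" where
  "DUR f1 f2 y d k \<longleftrightarrow> d > 0 \<and> k > 0 \<and>
     (\<forall>\<theta>. \<bar>\<theta>\<bar> > k \<longrightarrow> \<bar>LINT x|cond_law f1 f2 y \<theta>. x\<bar> \<le> \<bar>\<theta>\<bar> - d)"

definition PUR :: "(real \<Rightarrow> real) \<Rightarrow> (real \<Rightarrow> real) \<Rightarrow> real \<Rightarrow> real \<Rightarrow> real \<Rightarrow> bool" where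
  "PUR f1 f2 y d k \<longleftrightarrow> d > 0 \<and> k > 0 \<and>
     (\<forall>\<theta>. \<bar>\<theta>\<bar> > k \<longrightarrow> sgn \<theta> * (LINT x|cond_law f1 f2 y \<theta>. x - y) \<ge> d)"

end

theory Submission
  imports Defs "HOL-Probability.Probability"
begin


lemma nd_facts:
  assumes "noise_density f"
  shows "f \<in> borel_measurable borel" "integrable lborel f" "\<And>x. 0 < f x"
    "\<exists>B. \<forall>x. \<bar>f x\<bar> \<le> B"
proof -
  show "f \<in> borel_measurable borel" using assms unfolding noise_density_def
    by (simp add: borel_measurable_continuous_onI)
  show "integrable lborel f" "\<And>x. 0 < f x" using assms unfolding noise_density_def by auto
  have "bounded (range f)" using assms unfolding noise_density_def by auto
  then obtain B where "\<forall>z\<in>range f. norm z \<le> B" by (auto simp: bounded_iff)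
  then show "\<exists>B. \<forall>x. \<bar>f x\<bar> \<le> B" by auto
qed

lemma post_integrable:
  assumes "noise_density f1" "noise_density f2"
  shows "integrable lborel (\<lambda>x. post_dens f1 f2 y \<theta> x)"
proof -
  note a1 = nd_facts[OF assms(1)] and a2 = nd_facts[OF assms(2)]
  obtain B where B: "\<And>x. \<bar>f2 x\<bar> \<le> B" using a2(4) by auto
  have m1[measurable]: "f1 \<in> borel_measurable borel" and m2[measurable]: "f2 \<in> borel_measurable borel"
    using a1 a2 by auto
  have "integrable lborel (\<lambda>x. f1 (y + (-1) * x))"
    by (rule lborel_integrable_real_affine[OF a1(2)]) simp
  then have i: "integrable lborel (\<lambda>x. B * f1 (y - x))" by simp
  show ?thesis
  proof (rule Bochner_Integration.integrable_bound[OF i])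
    show "(\<lambda>x. post_dens f1 f2 y \<theta> x) \<in> borel_measurable lborel"
      unfolding post_dens_def by measurable
    show "AE x in lborel. norm (post_dens f1 f2 y \<theta> x) \<le> norm (B * f1 (y - x))"
    proof (rule AE_I2)
      fix x
      have "\<bar>f2 (x - \<theta>)\<bar> * \<bar>f1 (y - x)\<bar> \<le> B * \<bar>f1 (y - x)\<bar>"
        by (rule mult_right_mono[OF B]) simp
      moreover have "0 \<le> B" using B[of 0] by simp
      ultimately show "norm (post_dens f1 f2 y \<theta> x) \<le> norm (B * f1 (y - x))"
        unfolding post_dens_def by (simp add: abs_mult)
    qed
  qed
qed

lemma post_pos:
  assumes "noise_density f1" "noise_density f2"
  shows "0 < (LINT u|lborel. post_dens f1 f2 y \<theta> u)"
proof -
  note a1 = nd_facts[OF assms(1)] and a2 = nd_facts[OF assms(2)]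
  have pos: "\<And>x. 0 < post_dens f1 f2 y \<theta> x" unfolding post_dens_def using a1 a2 by simp
  have "(LINT u|lborel. post_dens f1 f2 y \<theta> u) \<ge> 0"
    using pos by (simp add: less_imp_le)
  moreover have "(LINT u|lborel. post_dens f1 f2 y \<theta> u) \<noteq> 0"
  proof
    assume "(LINT u|lborel. post_dens f1 f2 y \<theta> u) = 0"
    then have "AE x in lborel. post_dens f1 f2 y \<theta> x = 0"
      using integral_nonneg_eq_0_iff_AE[OF post_integrable[OF assms]] pos
      by (simp add: less_imp_le)
    then have "AE x::real in lborel. False" 
    proof (rule AE_mp)
      show "AE x in lborel. post_dens f1 f2 y \<theta> x = 0 \<longrightarrow> False"
        by (rule AE_I2) (use pos in \<open>auto simp: less_le\<close>)
    qed
    then have "ae_filter (lborel::real measure) = bot" using trivial_limit_def by blast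
    then show False by (simp add: ae_filter_eq_bot_iff)
  qed
  ultimately show ?thesis by simp
qed

lemma post_meas[measurable]:
  assumes "noise_density f1" "noise_density f2"
  shows "(\<lambda>x. post_dens f1 f2 y \<theta> x) \<in> borel_measurable borel"
proof -
  have m1[measurable]: "f1 \<in> borel_measurable borel" and m2[measurable]: "f2 \<in> borel_measurable borel"
    using nd_facts[OF assms(1)] nd_facts[OF assms(2)] by auto
  show ?thesis unfolding post_dens_def by measurable
qed

lemma cond_law_prob:
  assumes "noise_density f1" "noise_density f2"
  shows "prob_space (cond_law f1 f2 y \<theta>)"
proof
  let ?Z = "LINT u|lborel. post_dens f1 f2 y \<theta> u"
  have Z: "0 < ?Z" by (rule post_pos[OF assms])
  note a1 = nd_facts[OF assms(1)] and a2 = nd_facts[OF assms(2)]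
  have pos: "\<And>x. 0 < post_dens f1 f2 y \<theta> x" unfolding post_dens_def using a1 a2 by simp
  have i: "integrable lborel (\<lambda>x. post_dens f1 f2 y \<theta> x / ?Z)"
    using post_integrable[OF assms] by simp
  have "emeasure (cond_law f1 f2 y \<theta>) (space (cond_law f1 f2 y \<theta>))
      = (\<integral>\<^sup>+ x. ennreal (post_dens f1 f2 y \<theta> x / ?Z) \<partial>lborel)"
    unfolding cond_law_def
    by (subst emeasure_density) (use post_meas[OF assms] in auto)
  also have "\<dots> = ennreal (LINT x|lborel. post_dens f1 f2 y \<theta> x / ?Z)"
    by (rule nn_integral_eq_integral[OF i]) (use pos Z in \<open>simp add: less_imp_le\<close>)
  also have "(LINT x|lborel. post_dens f1 f2 y \<theta> x / ?Z) = 1"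
    using Z by simp
  finally show "emeasure (cond_law f1 f2 y \<theta>) (space (cond_law f1 f2 y \<theta>)) = 1" by simp
qed

lemma cond_law_sets[simp]: "sets (cond_law f1 f2 y \<theta>) = sets borel"
  "space (cond_law f1 f2 y \<theta>) = UNIV"
  unfolding cond_law_def by auto



definition Cst :: "real \<Rightarrow> real \<Rightarrow> real" where
  "Cst a b = max 1 (a * exp b) / (1 - exp (- b / 2))"

lemma exp_moment:
  fixes V :: "'a \<Rightarrow> real"
  assumes P: "prob_space M" and Vm[measurable]: "V \<in> borel_measurable M"
    and a: "a > 0" and b: "b > 0"
    and tail: "\<And>t. t \<ge> 0 \<Longrightarrow> measure M {x\<in>space M. \<bar>V x\<bar> > t} \<le> a * exp (- b * t)"
  shows "integrable M (\<lambda>x. exp (b/2 * \<bar>V x\<bar>))"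
    "(LINT x|M. exp (b/2 * \<bar>V x\<bar>)) \<le> Cst a b"
proof -
  interpret prob_space M by (rule P)
  define \<beta> where "\<beta> = b / 2"
  define r where "r = exp (- \<beta>)"
  define c where "c = max 1 (a * exp b)"
  have \<beta>: "\<beta> > 0" using b by (simp add: \<beta>_def)
  have r: "0 < r" "r < 1" using \<beta> by (auto simp: r_def)
  define S where "S n = {x\<in>space M. \<bar>V x\<bar> > real n - 1}" for n :: nat
  have S[measurable]: "S n \<in> sets M" for n unfolding S_def by measurable
  have pw: "ennreal (exp (\<beta> * \<bar>V x\<bar>)) \<le> (\<Sum>n. ennreal (exp (\<beta> * real n)) * indicator (S n) x)"
    if x: "x \<in> space M" for x
  proof -
    define m where "m = nat \<lceil>\<bar>V x\<bar>\<rceil>"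
    have m1: "\<bar>V x\<bar> \<le> real m" unfolding m_def by linarith
    have m2: "real m - 1 < \<bar>V x\<bar>" unfolding m_def by linarith
    have "ennreal (exp (\<beta> * \<bar>V x\<bar>)) \<le> ennreal (exp (\<beta> * real m)) * indicator (S m) x"
      using m1 m2 x \<beta> by (auto simp: S_def intro!: ennreal_leI)
    also have "\<dots> \<le> (\<Sum>n. ennreal (exp (\<beta> * real n)) * indicator (S n) x)"
    proof -
      have gen: "g m \<le> suminf g" for g :: "nat \<Rightarrow> ennreal"
        using sum_le_suminf[of g "{m}"] by simp
      show ?thesis by (rule gen)
    qed
    finally show ?thesis .
  qed
  have bnd: "ennreal (exp (\<beta> * real n)) * emeasure M (S n) \<le> ennreal (c * r ^ n)" for n
  proof (cases n)
    case 0
    have "emeasure M (S n) \<le> 1" by (rule emeasure_le_1)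
    then have "ennreal (exp (\<beta> * real n)) * emeasure M (S n) \<le> 1" using 0 by simp
    also have "1 \<le> ennreal (c * r ^ n)" using 0 by (simp add: c_def)
    finally show ?thesis .
  next
    case (Suc k)
    have "measure M (S n) \<le> a * exp (- b * (real n - 1))"
      unfolding S_def using tail[of "real n - 1"] Suc by simp
    then have "exp (\<beta> * real n) * measure M (S n) \<le> exp (\<beta> * real n) * (a * exp (- b * (real n - 1)))"
      by (simp add: mult_left_mono)
    also have "\<dots> = a * exp b * r ^ n"
    proof -
      have r1: "r ^ n = exp (- \<beta> * real n)"
        unfolding r_def by (simp add: exp_of_nat_mult[symmetric] mult.commute)
      have e: "exp (\<beta> * real n) * exp (- b * (real n - 1)) = exp b * exp (- \<beta> * real n)"
        unfolding mult_exp_exp by (simp add: \<beta>_def algebra_simps)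
      show ?thesis using e unfolding r1 by (simp add: algebra_simps)
    qed
    also have "\<dots> \<le> c * r ^ n" using r by (intro mult_right_mono) (auto simp: c_def)
    finally have "exp (\<beta> * real n) * measure M (S n) \<le> c * r ^ n" .
    then show ?thesis
      by (simp add: emeasure_eq_measure ennreal_mult[symmetric] ennreal_leI)
  qed
  have c0: "c > 0" by (simp add: c_def)
  have geo: "(\<lambda>n. c * r ^ n) sums (c * (1 / (1 - r)))"
    by (rule sums_mult, rule geometric_sums) (use r in auto)
  have "(\<integral>\<^sup>+ x. ennreal (exp (\<beta> * \<bar>V x\<bar>)) \<partial>M)
      \<le> (\<integral>\<^sup>+ x. (\<Sum>n. ennreal (exp (\<beta> * real n)) * indicator (S n) x) \<partial>M)"
    by (rule nn_integral_mono) (use pw in auto)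
  also have "\<dots> = (\<Sum>n. \<integral>\<^sup>+ x. ennreal (exp (\<beta> * real n)) * indicator (S n) x \<partial>M)"
    by (rule nn_integral_suminf) measurable
  also have "\<dots> = (\<Sum>n. ennreal (exp (\<beta> * real n)) * emeasure M (S n))"
    by (simp add: nn_integral_cmult_indicator)
  also have "\<dots> \<le> (\<Sum>n. ennreal (c * r ^ n))"
    by (rule suminf_le) (use bnd in auto)
  also have "\<dots> = ennreal (c * (1 / (1 - r)))"
    by (rule suminf_ennreal_eq[OF _ geo]) (use c0 r in auto)
  finally have nn: "(\<integral>\<^sup>+ x. ennreal (exp (\<beta> * \<bar>V x\<bar>)) \<partial>M) \<le> ennreal (c * (1 / (1 - r)))" .
  show int: "integrable M (\<lambda>x. exp (b/2 * \<bar>V x\<bar>))"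
    unfolding integrable_iff_bounded using nn
    by (auto simp: \<beta>_def[symmetric] top_unique[symmetric] intro: le_less_trans)
  have "ennreal (LINT x|M. exp (b/2 * \<bar>V x\<bar>)) = (\<integral>\<^sup>+ x. ennreal (exp (\<beta> * \<bar>V x\<bar>)) \<partial>M)"
    using nn_integral_eq_integral[OF int] by (simp add: \<beta>_def)
  also note nn
  finally show "(LINT x|M. exp (b/2 * \<bar>V x\<bar>)) \<le> Cst a b"
    using c0 r by (subst (asm) ennreal_le_iff) (auto simp: Cst_def c_def r_def \<beta>_def)
qed

lemma taylor_exp: "exp (z::real) \<le> 1 + z + z\<^sup>2 * exp \<bar>z\<bar> / 2"
proof -
  obtain t where t: "\<bar>t\<bar> \<le> \<bar>z\<bar>" "exp z = (\<Sum>m<2. z ^ m / fact m) + exp t / fact 2 * z ^ 2"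
    using Maclaurin_exp_le[of z 2] by blast
  have "exp t \<le> exp \<bar>z\<bar>" using t(1) by simp
  then have "exp t * z\<^sup>2 \<le> exp \<bar>z\<bar> * z\<^sup>2" by (rule mult_right_mono) simp
  then show ?thesis using t(2) by (simp add: numeral_2_eq_2 field_simps)
qed

lemma sq_exp_bound:
  fixes v \<beta> :: real
  assumes "\<beta> > 0"
  shows "v\<^sup>2 \<le> 16 / \<beta>\<^sup>2 * exp (\<beta> * \<bar>v\<bar> / 2)"
proof -
  define w where "w = \<beta> * \<bar>v\<bar> / 4"
  have w0: "0 \<le> w" using assms by (simp add: w_def)
  have "w \<le> exp w" using exp_ge_add_one_self[of w] by linarith
  then have "w\<^sup>2 \<le> (exp w)\<^sup>2" using w0 by (simp add: power_mono)
  also have "\<dots> = exp (\<beta> * \<bar>v\<bar> / 2)" by (simp add: w_def power2_eq_square mult_exp_exp)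
  finally have "w\<^sup>2 \<le> exp (\<beta> * \<bar>v\<bar> / 2)" .
  moreover have "v\<^sup>2 = 16 / \<beta>\<^sup>2 * w\<^sup>2" using assms by (simp add: w_def power2_eq_square field_simps)
  ultimately show ?thesis using assms by (simp add: divide_right_mono)
qed

lemma mgf_bound:
  fixes V :: "'a \<Rightarrow> real"
  assumes P: "prob_space M" and Vm[measurable]: "V \<in> borel_measurable M"
    and a: "a > 0" and b: "b > 0"
    and tail: "\<And>t. t \<ge> 0 \<Longrightarrow> measure M {x\<in>space M. \<bar>V x\<bar> > t} \<le> a * exp (- b * t)"
    and \<alpha>: "0 < \<alpha>" "\<alpha> \<le> b / 4"
  shows "integrable M (\<lambda>x. exp (\<alpha> * V x))" "integrable M V"
    "(LINT x|M. exp (\<alpha> * V x)) \<le> 1 + \<alpha> * (LINT x|M. V x) + \<alpha>\<^sup>2 * (32 / b\<^sup>2 * Cst a b)"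
proof -
  interpret prob_space M by (rule P)
  define \<beta> where "\<beta> = b / 2"
  have \<beta>: "\<beta> > 0" using b by (simp add: \<beta>_def)
  have I: "integrable M (\<lambda>x. exp (\<beta> * \<bar>V x\<bar>))"
    using exp_moment(1)[OF P Vm a b tail] by (simp add: \<beta>_def)
  have IB: "(LINT x|M. exp (\<beta> * \<bar>V x\<bar>)) \<le> Cst a b"
    using exp_moment(2)[OF P Vm a b tail] by (simp add: \<beta>_def)
  show I1: "integrable M (\<lambda>x. exp (\<alpha> * V x))"
  proof (rule Bochner_Integration.integrable_bound[OF I])
    show "AE x in M. norm (exp (\<alpha> * V x)) \<le> norm (exp (\<beta> * \<bar>V x\<bar>))"
    proof (rule AE_I2)
      fix x
      have "\<alpha> * V x \<le> \<alpha> * \<bar>V x\<bar>" using \<alpha> by (simp add: mult_left_mono)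
      also have "\<dots> \<le> \<beta> * \<bar>V x\<bar>" using \<alpha> by (intro mult_right_mono) (auto simp: \<beta>_def)
      finally show "norm (exp (\<alpha> * V x)) \<le> norm (exp (\<beta> * \<bar>V x\<bar>))" by simp
    qed
  qed measurable
  have I2': "integrable M (\<lambda>x. exp (\<beta> * \<bar>V x\<bar>) / \<beta>)" using I by simp
  show I2: "integrable M V"
  proof (rule Bochner_Integration.integrable_bound[OF I2'])
    show "AE x in M. norm (V x) \<le> norm (exp (\<beta> * \<bar>V x\<bar>) / \<beta>)"
    proof (rule AE_I2)
      fix x
      have "\<beta> * \<bar>V x\<bar> \<le> exp (\<beta> * \<bar>V x\<bar>)" using exp_ge_add_one_self[of "\<beta> * \<bar>V x\<bar>"] by linarith
      then show "norm (V x) \<le> norm (exp (\<beta> * \<bar>V x\<bar>) / \<beta>)" using \<beta> by (simp add: field_simps)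
    qed
  qed measurable
  define K where "K = 32 / b\<^sup>2"
  have K0: "K \<ge> 0" by (simp add: K_def)
  have pw: "exp (\<alpha> * V x) \<le> 1 + \<alpha> * V x + \<alpha>\<^sup>2 * (K * exp (\<beta> * \<bar>V x\<bar>))" for x
  proof -
    have "exp (\<alpha> * V x) \<le> 1 + \<alpha> * V x + (\<alpha> * V x)\<^sup>2 * exp \<bar>\<alpha> * V x\<bar> / 2"
      by (rule taylor_exp)
    also have "(\<alpha> * V x)\<^sup>2 * exp \<bar>\<alpha> * V x\<bar> / 2 = \<alpha>\<^sup>2 * ((V x)\<^sup>2 * exp (\<alpha> * \<bar>V x\<bar>) / 2)"
      using \<alpha> by (simp add: abs_mult power_mult_distrib)
    also have "(V x)\<^sup>2 * exp (\<alpha> * \<bar>V x\<bar>) / 2 \<le> K * exp (\<beta> * \<bar>V x\<bar>)"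
    proof -
      have e1: "exp (\<alpha> * \<bar>V x\<bar>) \<le> exp (\<beta> * \<bar>V x\<bar> / 2)"
      proof -
        have "\<alpha> * \<bar>V x\<bar> \<le> (\<beta> / 2) * \<bar>V x\<bar>" using \<alpha> by (intro mult_right_mono) (auto simp: \<beta>_def)
        then show ?thesis by simp
      qed
      have "(V x)\<^sup>2 * exp (\<alpha> * \<bar>V x\<bar>) \<le> (16 / \<beta>\<^sup>2 * exp (\<beta> * \<bar>V x\<bar> / 2)) * exp (\<beta> * \<bar>V x\<bar> / 2)"
        by (intro mult_mono sq_exp_bound[OF \<beta>] e1) auto
      also have "\<dots> = 16 / \<beta>\<^sup>2 * exp (\<beta> * \<bar>V x\<bar>)"
        by (simp add: mult_exp_exp)
      finally show ?thesis using b by (simp add: K_def \<beta>_def power2_eq_square field_simps)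
    qed
    then have "\<alpha>\<^sup>2 * ((V x)\<^sup>2 * exp (\<alpha> * \<bar>V x\<bar>) / 2) \<le> \<alpha>\<^sup>2 * (K * exp (\<beta> * \<bar>V x\<bar>))"
      by (rule mult_left_mono) simp
    finally show ?thesis by simp
  qed
  have I3: "integrable M (\<lambda>x. 1 + \<alpha> * V x + \<alpha>\<^sup>2 * (K * exp (\<beta> * \<bar>V x\<bar>)))"
    using I I2 by auto
  have "(LINT x|M. exp (\<alpha> * V x)) \<le> (LINT x|M. 1 + \<alpha> * V x + \<alpha>\<^sup>2 * (K * exp (\<beta> * \<bar>V x\<bar>)))"
    by (rule integral_mono[OF I1 I3]) (rule pw)
  also have "\<dots> = 1 + \<alpha> * (LINT x|M. V x) + \<alpha>\<^sup>2 * (K * (LINT x|M. exp (\<beta> * \<bar>V x\<bar>)))"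
    using I I2 by (simp add: prob_space)
  also have "\<dots> \<le> 1 + \<alpha> * (LINT x|M. V x) + \<alpha>\<^sup>2 * (K * Cst a b)"
    using IB K0 by (simp add: mult_left_mono)
  finally show "(LINT x|M. exp (\<alpha> * V x)) \<le> 1 + \<alpha> * (LINT x|M. V x) + \<alpha>\<^sup>2 * (32 / b\<^sup>2 * Cst a b)"
    by (simp add: K_def)
qed


lemma cond_law_meas: fixes f :: "real \<Rightarrow> real" shows "f \<in> borel_measurable borel \<Longrightarrow> f \<in> borel_measurable (cond_law f1 f2 y \<theta>)"
  using measurable_cong_sets[OF cond_law_sets(1) refl, of f1 f2 y \<theta> borel] by blast

definition A0 :: "real \<Rightarrow> real \<Rightarrow> real \<Rightarrow> real" where
  "A0 a b d = min (b / 4) (d / (2 * (32 / b\<^sup>2 * Cst a b) + 1))"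

lemma Cst_pos: "b > 0 \<Longrightarrow> Cst a b > 0"
  unfolding Cst_def by (intro divide_pos_pos) auto

lemma A0_pos: "b > 0 \<Longrightarrow> d > 0 \<Longrightarrow> A0 a b d > 0"
  unfolding A0_def using Cst_pos[of b a] by (auto intro!: divide_pos_pos add_nonneg_pos)

lemma case_lemma:
  fixes V :: "real \<Rightarrow> real"
  assumes P: "prob_space M" and Vm: "V \<in> borel_measurable M"
    and a: "a > 0" and b: "b > 0" and d: "d > 0"
    and tail: "\<And>t. t \<ge> 0 \<Longrightarrow> measure M {x\<in>space M. \<bar>V x\<bar> > t} \<le> a * exp (- b * t)"
    and EV: "integrable M V \<Longrightarrow> (LINT x|M. V x) \<le> - d"
    and \<alpha>: "0 < \<alpha>" "\<alpha> < A0 a b d"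
  shows "integrable M (\<lambda>x. exp (\<alpha> * V x)) \<and> (LINT x|M. exp (\<alpha> * V x)) \<le> 1 - \<alpha> * d / 2"
proof -
  define K where "K = 32 / b\<^sup>2 * Cst a b"
  have K: "K > 0" using Cst_pos[OF b, of a] b by (simp add: K_def)
  have \<alpha>b: "\<alpha> \<le> b / 4" using \<alpha> by (simp add: A0_def)
  have \<alpha>d: "\<alpha> < d / (2 * K + 1)" using \<alpha> by (simp add: A0_def K_def)
  note mg = mgf_bound[OF P Vm a b tail \<alpha>(1) \<alpha>b]
  have "\<alpha> * (2 * K + 1) < d" using \<alpha>d K by (simp add: field_simps)
  then have "\<alpha> * K \<le> d / 2" using \<alpha> by (simp add: algebra_simps)
  then have q: "\<alpha>\<^sup>2 * K \<le> \<alpha> * (d / 2)" using \<alpha> by (simp add: power2_eq_square mult.assoc mult_left_mono)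
  have "\<alpha> * (LINT x|M. V x) \<le> \<alpha> * (- d)" by (rule mult_left_mono) (use EV[OF mg(2)] \<alpha> in auto)
  then have "(LINT x|M. exp (\<alpha> * V x)) \<le> 1 - \<alpha> * d / 2"
  proof -
    have m3: "(LINT x|M. exp (\<alpha> * V x)) \<le> 1 + \<alpha> * (LINT x|M. V x) + \<alpha>\<^sup>2 * K"
      using mg(3) by (simp add: K_def)
    show ?thesis using m3 q \<open>\<alpha> * (LINT x|M. V x) \<le> \<alpha> * (- d)\<close> by linarith
  qed
  then show ?thesis using mg(1) by simp
qed

lemma tail_shift:
  assumes P: "prob_space M" and sp: "space M = UNIV" and sets: "sets M = sets borel"
    and a: "a > 0" and b: "b > 0"
    and tail: "\<And>t. t \<ge> 0 \<Longrightarrow> measure M {x. \<bar>x::real\<bar> > t} \<le> a * exp (- b * t)"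
  shows "\<And>t. t \<ge> 0 \<Longrightarrow> measure M {x. \<bar>x - y\<bar> > t} \<le> (max a 1 * exp (b * \<bar>y\<bar>)) * exp (- b * t)"
proof -
  interpret prob_space M by (rule P)
  fix t :: real assume t: "t \<ge> 0"
  show "measure M {x. \<bar>x - y\<bar> > t} \<le> (max a 1 * exp (b * \<bar>y\<bar>)) * exp (- b * t)"
  proof (cases "t \<ge> \<bar>y\<bar>")
    case True
    have "{x. \<bar>x - y\<bar> > t} \<subseteq> {x. \<bar>x\<bar> > t - \<bar>y\<bar>}" by auto
    moreover have "{x. \<bar>x\<bar> > t - \<bar>y\<bar>} \<in> events" using sets by simp
    ultimately have "measure M {x. \<bar>x - y\<bar> > t} \<le> measure M {x. \<bar>x\<bar> > t - \<bar>y\<bar>}"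
      by (intro finite_measure_mono) auto
    also have "\<dots> \<le> a * exp (- b * (t - \<bar>y\<bar>))" using tail True by simp
    also have "\<dots> = a * exp (b * \<bar>y\<bar>) * exp (- b * t)"
      by (simp add: mult_exp_exp algebra_simps)
    also have "\<dots> \<le> (max a 1 * exp (b * \<bar>y\<bar>)) * exp (- b * t)"
      by (intro mult_right_mono) auto
    finally show ?thesis .
  next
    case False
    have "measure M {x. \<bar>x - y\<bar> > t} \<le> 1" by simp
    also have "1 \<le> exp (b * \<bar>y\<bar> + - b * t)" using False b
      by (simp add: algebra_simps mult_left_mono)
    also have "\<dots> = exp (b * \<bar>y\<bar>) * exp (- b * t)" by (simp add: exp_add[symmetric])
    also have "\<dots> \<le> (max a 1 * exp (b * \<bar>y\<bar>)) * exp (- b * t)"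
      by (intro mult_right_mono) auto
    finally show ?thesis .
  qed
qed


lemma scale_conclude:
  fixes V g :: "'a \<Rightarrow> real" and \<alpha> d c :: real
  assumes "integrable M (\<lambda>x. exp (\<alpha> * V x))" "(LINT x|M. exp (\<alpha> * V x)) \<le> 1 - \<alpha> * d / 2"
    and "\<And>x. g x = exp c * exp (\<alpha> * V x)"
  shows "integrable M g \<and> (LINT x|M. g x) \<le> exp c * (1 - \<alpha> * d / 2)"
proof -
  have g: "g = (\<lambda>x. exp c * exp (\<alpha> * V x))" using assms(3) by auto
  show ?thesis unfolding g using assms(1,2) by (auto intro: mult_left_mono)
qed

lemma mean_lemma:
  fixes V :: "real \<Rightarrow> real"
  assumes P: "prob_space M" and I: "integrable M V" and V: "\<And>x. V x = s * x + c" and s: "s \<noteq> 0"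
  shows "integrable M (\<lambda>x. x) \<and> (LINT x|M. V x) = s * (LINT x|M. x) + c"
proof -
  interpret prob_space M by (rule P)
  have "integrable M (\<lambda>x. (V x - c) / s)" using I by simp
  moreover have "(\<lambda>x. (V x - c) / s) = (\<lambda>x. x)" using s by (auto simp: V)
  ultimately have I2: "integrable M (\<lambda>x. x)" by simp
  have "V = (\<lambda>x. s * x + c)" using V by auto
  then show ?thesis using I2 by (simp add: prob_space)
qed

theorem mainTheorem4:
  fixes f1 f2 :: "real \<Rightarrow> real" and y d k :: real
  assumes "noise_density f1" and "noise_density f2"
    and "posterior_proper f1 f2 y"
  shows
    "(DUR f1 f2 y d k \<and> GTIP f1 f2 y (\<lambda>\<theta> x. x - \<theta>) \<longrightarrow>
       (\<exists>\<alpha>0>0. \<forall>\<alpha>. 0 < \<alpha> \<and> \<alpha> < \<alpha>0 \<longrightarrow>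
          (\<forall>\<theta>. \<theta> > k \<longrightarrow>
             integrable (cond_law f1 f2 y \<theta>) (\<lambda>x. exp (\<alpha> * x)) \<and>
             (LINT x|cond_law f1 f2 y \<theta>. exp (\<alpha> * x)) \<le> exp (\<alpha> * \<theta>) * (1 - \<alpha> * d / 2)) \<and>
          (\<forall>\<theta>. \<theta> < - k \<longrightarrow>
             integrable (cond_law f1 f2 y \<theta>) (\<lambda>x. exp (- \<alpha> * x)) \<and>
             (LINT x|cond_law f1 f2 y \<theta>. exp (- \<alpha> * x)) \<le> exp (- \<alpha> * \<theta>) * (1 - \<alpha> * d / 2))))
     \<and>
     (PUR f1 f2 y d k \<and> GTIP f1 f2 y (\<lambda>\<theta> x. x) \<longrightarrow>
       (\<exists>\<alpha>0>0. \<forall>\<alpha>. 0 < \<alpha> \<and> \<alpha> < \<alpha>0 \<longrightarrow>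
          (\<forall>\<theta>. \<theta> > k \<longrightarrow>
             integrable (cond_law f1 f2 y \<theta>) (\<lambda>x. exp (\<alpha> * (y - (x - \<theta>)))) \<and>
             (LINT x|cond_law f1 f2 y \<theta>. exp (\<alpha> * (y - (x - \<theta>))))
                \<le> exp (\<alpha> * \<theta>) * (1 - \<alpha> * d / 2)) \<and>
          (\<forall>\<theta>. \<theta> < - k \<longrightarrow>
             integrable (cond_law f1 f2 y \<theta>) (\<lambda>x. exp (- \<alpha> * (y - (x - \<theta>)))) \<and>
             (LINT x|cond_law f1 f2 y \<theta>. exp (- \<alpha> * (y - (x - \<theta>))))
                \<le> exp (- \<alpha> * \<theta>) * (1 - \<alpha> * d / 2))))"
proof (intro conjI impI)
  note P = cond_law_prob[OF assms(1,2)]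
  assume H: "DUR f1 f2 y d k \<and> GTIP f1 f2 y (\<lambda>\<theta> x. x - \<theta>)"
  then have d: "d > 0" and k: "k > 0" and dur: "\<And>\<theta>. \<bar>\<theta>\<bar> > k \<Longrightarrow> \<bar>LINT x|cond_law f1 f2 y \<theta>. x\<bar> \<le> \<bar>\<theta>\<bar> - d"
    unfolding DUR_def by auto
  obtain a b where a: "a > 0" and b: "b > 0" and tl:
    "\<And>\<theta> t. t \<ge> 0 \<Longrightarrow> measure (cond_law f1 f2 y \<theta>) {x. \<bar>x - \<theta>\<bar> > t} \<le> a * exp (- b * t)"
    using H unfolding GTIP_def by blast
  show "\<exists>\<alpha>0>0. \<forall>\<alpha>. 0 < \<alpha> \<and> \<alpha> < \<alpha>0 \<longrightarrow>
          (\<forall>\<theta>. \<theta> > k \<longrightarrow>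
             integrable (cond_law f1 f2 y \<theta>) (\<lambda>x. exp (\<alpha> * x)) \<and>
             (LINT x|cond_law f1 f2 y \<theta>. exp (\<alpha> * x)) \<le> exp (\<alpha> * \<theta>) * (1 - \<alpha> * d / 2)) \<and>
          (\<forall>\<theta>. \<theta> < - k \<longrightarrow>
             integrable (cond_law f1 f2 y \<theta>) (\<lambda>x. exp (- \<alpha> * x)) \<and>
             (LINT x|cond_law f1 f2 y \<theta>. exp (- \<alpha> * x)) \<le> exp (- \<alpha> * \<theta>) * (1 - \<alpha> * d / 2))"
  proof (rule exI[of _ "A0 a b d"], intro conjI allI impI)
    show "A0 a b d > 0" using A0_pos[OF b d] .
  next
    fix \<alpha> \<theta> :: real assume \<alpha>: "0 < \<alpha> \<and> \<alpha> < A0 a b d" and th: "\<theta> > k"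
    have cl: "integrable (cond_law f1 f2 y \<theta>) (\<lambda>x. exp (\<alpha> * (x - \<theta>))) \<and>
        (LINT x|cond_law f1 f2 y \<theta>. exp (\<alpha> * (x - \<theta>))) \<le> 1 - \<alpha> * d / 2"
    proof (rule case_lemma[OF P[of y \<theta>], of "\<lambda>x. x - \<theta>" a b d])
      show "(\<lambda>x. x - \<theta>) \<in> borel_measurable (cond_law f1 f2 y \<theta>)" by (rule cond_law_meas) simp
      show "measure (cond_law f1 f2 y \<theta>) {x \<in> space (cond_law f1 f2 y \<theta>). \<bar>x - \<theta>\<bar> > t} \<le> a * exp (- b * t)"
        if "t \<ge> 0" for t using tl[OF that] by simp
      assume I: "integrable (cond_law f1 f2 y \<theta>) (\<lambda>x. x - \<theta>)"
      have m: "integrable (cond_law f1 f2 y \<theta>) (\<lambda>x. x) \<and> (LINT x|cond_law f1 f2 y \<theta>. x - \<theta>) = 1 * (LINT x|cond_law f1 f2 y \<theta>. x) + - \<theta>"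
        by (rule mean_lemma[OF P[of y \<theta>] I]) auto
      have "\<bar>LINT x|cond_law f1 f2 y \<theta>. x\<bar> \<le> \<bar>\<theta>\<bar> - d" using dur[of \<theta>] th k by simp
      then show "(LINT x|cond_law f1 f2 y \<theta>. x - \<theta>) \<le> - d" using m th k by simp
    qed (use a b d \<alpha> in auto)
    have r: "integrable (cond_law f1 f2 y \<theta>) (\<lambda>x. exp (\<alpha> * x)) \<and>
             (LINT x|cond_law f1 f2 y \<theta>. exp (\<alpha> * x)) \<le> exp (\<alpha> * \<theta>) * (1 - \<alpha> * d / 2)"
      by (rule scale_conclude[OF cl[THEN conjunct1] cl[THEN conjunct2]]) (simp add: mult_exp_exp algebra_simps)
    then show "integrable (cond_law f1 f2 y \<theta>) (\<lambda>x. exp (\<alpha> * x))" by simp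
    from r show "(LINT x|cond_law f1 f2 y \<theta>. exp (\<alpha> * x)) \<le> exp (\<alpha> * \<theta>) * (1 - \<alpha> * d / 2)" by simp
  next
    fix \<alpha> \<theta> :: real assume \<alpha>: "0 < \<alpha> \<and> \<alpha> < A0 a b d" and th: "\<theta> < - k"
    have cl: "integrable (cond_law f1 f2 y \<theta>) (\<lambda>x. exp (\<alpha> * (\<theta> - x))) \<and>
        (LINT x|cond_law f1 f2 y \<theta>. exp (\<alpha> * (\<theta> - x))) \<le> 1 - \<alpha> * d / 2"
    proof (rule case_lemma[OF P[of y \<theta>], of "\<lambda>x. \<theta> - x" a b d])
      show "(\<lambda>x. \<theta> - x) \<in> borel_measurable (cond_law f1 f2 y \<theta>)" by (rule cond_law_meas) simp
      show "measure (cond_law f1 f2 y \<theta>) {x \<in> space (cond_law f1 f2 y \<theta>). \<bar>\<theta> - x\<bar> > t} \<le> a * exp (- b * t)"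
        if "t \<ge> 0" for t using tl[OF that, of \<theta>] by (simp add: abs_minus_commute[of \<theta>])
      assume I: "integrable (cond_law f1 f2 y \<theta>) (\<lambda>x. \<theta> - x)"
      have m: "integrable (cond_law f1 f2 y \<theta>) (\<lambda>x. x) \<and> (LINT x|cond_law f1 f2 y \<theta>. \<theta> - x) = (-1) * (LINT x|cond_law f1 f2 y \<theta>. x) + \<theta>"
        by (rule mean_lemma[OF P[of y \<theta>] I]) auto
      have "\<bar>LINT x|cond_law f1 f2 y \<theta>. x\<bar> \<le> \<bar>\<theta>\<bar> - d" using dur[of \<theta>] th k by simp
      then show "(LINT x|cond_law f1 f2 y \<theta>. \<theta> - x) \<le> - d" using m th k by simp
    qed (use a b d \<alpha> in auto)
    have r: "integrable (cond_law f1 f2 y \<theta>) (\<lambda>x. exp (- \<alpha> * x)) \<and>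
             (LINT x|cond_law f1 f2 y \<theta>. exp (- \<alpha> * x)) \<le> exp (- \<alpha> * \<theta>) * (1 - \<alpha> * d / 2)"
      by (rule scale_conclude[OF cl[THEN conjunct1] cl[THEN conjunct2]]) (simp add: mult_exp_exp algebra_simps)
    then show "integrable (cond_law f1 f2 y \<theta>) (\<lambda>x. exp (- \<alpha> * x))" by simp
    from r show "(LINT x|cond_law f1 f2 y \<theta>. exp (- \<alpha> * x)) \<le> exp (- \<alpha> * \<theta>) * (1 - \<alpha> * d / 2)" by simp
  qed
next
  note P = cond_law_prob[OF assms(1,2)]
  assume H: "PUR f1 f2 y d k \<and> GTIP f1 f2 y (\<lambda>\<theta> x. x)"
  then have d: "d > 0" and k: "k > 0" and pur: "\<And>\<theta>. \<bar>\<theta>\<bar> > k \<Longrightarrow> sgn \<theta> * (LINT x|cond_law f1 f2 y \<theta>. x - y) \<ge> d"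
    unfolding PUR_def by auto
  obtain a0 b where a0: "a0 > 0" and b: "b > 0" and tl0:
    "\<And>\<theta> t. t \<ge> 0 \<Longrightarrow> measure (cond_law f1 f2 y \<theta>) {x. \<bar>x\<bar> > t} \<le> a0 * exp (- b * t)"
    using H unfolding GTIP_def by blast
  define a where "a = max a0 1 * exp (b * \<bar>y\<bar>)"
  have a: "a > 0" unfolding a_def by simp
  have tl: "\<And>\<theta> t. t \<ge> 0 \<Longrightarrow> measure (cond_law f1 f2 y \<theta>) {x. \<bar>x - y\<bar> > t} \<le> a * exp (- b * t)"
    unfolding a_def by (rule tail_shift[OF P _ _ a0 b tl0]) auto
  show "\<exists>\<alpha>0>0. \<forall>\<alpha>. 0 < \<alpha> \<and> \<alpha> < \<alpha>0 \<longrightarrow>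
          (\<forall>\<theta>. \<theta> > k \<longrightarrow>
             integrable (cond_law f1 f2 y \<theta>) (\<lambda>x. exp (\<alpha> * (y - (x - \<theta>)))) \<and>
             (LINT x|cond_law f1 f2 y \<theta>. exp (\<alpha> * (y - (x - \<theta>))))
                \<le> exp (\<alpha> * \<theta>) * (1 - \<alpha> * d / 2)) \<and>
          (\<forall>\<theta>. \<theta> < - k \<longrightarrow>
             integrable (cond_law f1 f2 y \<theta>) (\<lambda>x. exp (- \<alpha> * (y - (x - \<theta>)))) \<and>
             (LINT x|cond_law f1 f2 y \<theta>. exp (- \<alpha> * (y - (x - \<theta>))))
                \<le> exp (- \<alpha> * \<theta>) * (1 - \<alpha> * d / 2))"
  proof (rule exI[of _ "A0 a b d"], intro conjI allI impI)
    show "A0 a b d > 0" using A0_pos[OF b d] .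
  next
    fix \<alpha> \<theta> :: real assume \<alpha>: "0 < \<alpha> \<and> \<alpha> < A0 a b d" and th: "\<theta> > k"
    have cl: "integrable (cond_law f1 f2 y \<theta>) (\<lambda>x. exp (\<alpha> * (y - x))) \<and>
        (LINT x|cond_law f1 f2 y \<theta>. exp (\<alpha> * (y - x))) \<le> 1 - \<alpha> * d / 2"
    proof (rule case_lemma[OF P[of y \<theta>], of "\<lambda>x. y - x" a b d])
      show "(\<lambda>x. y - x) \<in> borel_measurable (cond_law f1 f2 y \<theta>)" by (rule cond_law_meas) simp
      show "measure (cond_law f1 f2 y \<theta>) {x \<in> space (cond_law f1 f2 y \<theta>). \<bar>y - x\<bar> > t} \<le> a * exp (- b * t)"
        if "t \<ge> 0" for t using tl[OF that, of \<theta>] by (simp add: abs_minus_commute[of y])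
      assume I: "integrable (cond_law f1 f2 y \<theta>) (\<lambda>x. y - x)"
      have m: "integrable (cond_law f1 f2 y \<theta>) (\<lambda>x. x) \<and> (LINT x|cond_law f1 f2 y \<theta>. y - x) = (-1) * (LINT x|cond_law f1 f2 y \<theta>. x) + y"
        by (rule mean_lemma[OF P[of y \<theta>] I]) auto
      interpret prob_space "cond_law f1 f2 y \<theta>" by (rule P[of y \<theta>])
      have e: "(LINT x|cond_law f1 f2 y \<theta>. x - y) = (LINT x|cond_law f1 f2 y \<theta>. x) - y"
      proof -
        have pu: "prob UNIV = 1" using prob_space by simp
        show ?thesis using m by (simp add: pu)
      qed
      have "sgn \<theta> * (LINT x|cond_law f1 f2 y \<theta>. x - y) \<ge> d" using pur[of \<theta>] th k by simp
      then show "(LINT x|cond_law f1 f2 y \<theta>. y - x) \<le> - d" using m e th k by simp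
    qed (use a b d \<alpha> in auto)
    have r: "integrable (cond_law f1 f2 y \<theta>) (\<lambda>x. exp (\<alpha> * (y - (x - \<theta>)))) \<and>
             (LINT x|cond_law f1 f2 y \<theta>. exp (\<alpha> * (y - (x - \<theta>)))) \<le> exp (\<alpha> * \<theta>) * (1 - \<alpha> * d / 2)"
      by (rule scale_conclude[OF cl[THEN conjunct1] cl[THEN conjunct2]]) (simp add: mult_exp_exp algebra_simps)
    then show "integrable (cond_law f1 f2 y \<theta>) (\<lambda>x. exp (\<alpha> * (y - (x - \<theta>))))" by simp
    from r show "(LINT x|cond_law f1 f2 y \<theta>. exp (\<alpha> * (y - (x - \<theta>)))) \<le> exp (\<alpha> * \<theta>) * (1 - \<alpha> * d / 2)" by simp
  next
    fix \<alpha> \<theta> :: real assume \<alpha>: "0 < \<alpha> \<and> \<alpha> < A0 a b d" and th: "\<theta> < - k"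
    have cl: "integrable (cond_law f1 f2 y \<theta>) (\<lambda>x. exp (\<alpha> * (x - y))) \<and>
        (LINT x|cond_law f1 f2 y \<theta>. exp (\<alpha> * (x - y))) \<le> 1 - \<alpha> * d / 2"
    proof (rule case_lemma[OF P[of y \<theta>], of "\<lambda>x. x - y" a b d])
      show "(\<lambda>x. x - y) \<in> borel_measurable (cond_law f1 f2 y \<theta>)" by (rule cond_law_meas) simp
      show "measure (cond_law f1 f2 y \<theta>) {x \<in> space (cond_law f1 f2 y \<theta>). \<bar>x - y\<bar> > t} \<le> a * exp (- b * t)"
        if "t \<ge> 0" for t using tl[OF that] by simp
      assume I: "integrable (cond_law f1 f2 y \<theta>) (\<lambda>x. x - y)"
      have "sgn \<theta> * (LINT x|cond_law f1 f2 y \<theta>. x - y) \<ge> d" using pur[of \<theta>] th k by simp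
      then show "(LINT x|cond_law f1 f2 y \<theta>. x - y) \<le> - d" using th k by simp
    qed (use a b d \<alpha> in auto)
    have r: "integrable (cond_law f1 f2 y \<theta>) (\<lambda>x. exp (- \<alpha> * (y - (x - \<theta>)))) \<and>
             (LINT x|cond_law f1 f2 y \<theta>. exp (- \<alpha> * (y - (x - \<theta>)))) \<le> exp (- \<alpha> * \<theta>) * (1 - \<alpha> * d / 2)"
      by (rule scale_conclude[OF cl[THEN conjunct1] cl[THEN conjunct2]]) (simp add: mult_exp_exp algebra_simps)
    then show "integrable (cond_law f1 f2 y \<theta>) (\<lambda>x. exp (- \<alpha> * (y - (x - \<theta>))))" by simp
    from r show "(LINT x|cond_law f1 f2 y \<theta>. exp (- \<alpha> * (y - (x - \<theta>)))) \<le> exp (- \<alpha> * \<theta>) * (1 - \<alpha> * d / 2)" by simp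
  qed
qed

end
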